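(* Let $\Gamma$ and $\Gamma'$ be triangulations of connected closed $2$-dimensional surfaces $M$ and $M'$, and let $\tau,\tau'$ be $z$-orientations of $\Gamma,\Gamma'$ respectively such that all faces of $(\Gamma,\tau)$ and of $(\Gamma',\tau')$ are of type II. Then for any face $F$ of $\Gamma$, any face $F'$ of $\Gamma'$ and every special homeomorphism $g:\partial F\to\partial F'$, there exists a $z$-orientation of the connected sum $\Gamma\#_g\Gamma'$ for which all faces are of type II.
   Context: A triangulation of a connected closed surface (not necessarily orientable) is a closed $2$-cell embedding of a connected finite simple graph all of whose faces are triangles. Two edges are adjacent if distinct and in a common face; two faces are adjacent if distinct and their intersection is an edge. A zigzag is a sequence of edges $(e_i)_{i\in\mathbb{N}}$ such that for every $i$: $e_i,e_{i+1}$ are adjacent, the faces containing $e_i,e_{i+1}$ and $e_{i+1},e_{i+2}$ are adjacent, and $e_i,e_{i+2}$ are disjoint; it is a cyclic sequence, equivalently a cyclic vertex sequence $v_1,\dots,v_n$ with $e_i=v_iv_{i+1}$, traversing $e_i$ from $v_i$ to $v_{i+1}$. A $z$-orientation $\tau$ is a set of zigzags containing exactly one of $Z,Z^{-1}$ (reversed zigzag) for every zigzag $Z$. Every edge is traversed exactly twice in total by zigzags of $\tau$; it is of type I if in opposite directions, of type II if in the same direction. A face is of type II if all three of its edges are of type II (they then form a directed cycle); otherwise (two type I edges and one type II edge) it is of type I. A homeomorphism $g:\partial F\to\partial F'$ between boundaries of faces is special if it maps vertices to vertices. The connected sum $\Gamma\#_g\Gamma'$ is the triangulation of $M\# M'$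 obtained by removing the interiors of $F$ and $F'$ and gluing $\partial F$ to $\partial F'$ via $g$. *)

theory Defs
  imports Main
begin

text \<open>Combinatorial model of a triangulation of a connected closed surface:
  a finite set of faces, each face being the 3-element set of its vertices.\<close>

definition tri_edges :: "'v set set \<Rightarrow> 'v set set" where
  "tri_edges T = {e. card e = 2 \<and> (\<exists>F\<in>T. e \<subseteq> F)}"

definition tri_vertices :: "'v set set \<Rightarrow> 'v set" where
  "tri_vertices T = \<Union>T"

definition link_rel :: "'v set set \<Rightarrow> 'v \<Rightarrow> ('v \<times> 'v) set" where
  "link_rel T v = {(x, y). {v, x, y} \<in> T}"

definition neighbours :: "'v set set \<Rightarrow> 'v \<Rightarrow> 'v set" where
  "neighbours T v = {x. {v, x} \<in> tri_edges T}"

definition edge_rel :: "'v set set \<Rightarrow> ('v \<times> 'v) set" where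
  "edge_rel T = {(x, y). {x, y} \<in> tri_edges T}"

definition triangulation :: "'v set set \<Rightarrow> bool" where
  "triangulation T \<longleftrightarrow>
     finite T \<and> T \<noteq> {} \<and>
     (\<forall>F\<in>T. card F = 3) \<and>
     (\<forall>e\<in>tri_edges T. card {F\<in>T. e \<subseteq> F} = 2) \<and>
     (\<forall>v\<in>tri_vertices T. \<forall>x\<in>neighbours T v. \<forall>y\<in>neighbours T v.
         (x, y) \<in> (link_rel T v)\<^sup>*) \<and>
     (\<forall>x\<in>tri_vertices T. \<forall>y\<in>tri_vertices T. (x, y) \<in> (edge_rel T)\<^sup>*)"

definition adjacent_faces :: "'v set set \<Rightarrow> 'v set \<Rightarrow> 'v set \<Rightarrow> bool" where
  "adjacent_faces T F G \<longleftrightarrow> F \<in> T \<and> G \<in> T \<and> F \<noteq> G \<and> F \<inter> G \<in> tri_edges T"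

definition zigzag_seq :: "'v set set \<Rightarrow> (nat \<Rightarrow> 'v) \<Rightarrow> bool" where
  "zigzag_seq T s \<longleftrightarrow>
     (let e = (\<lambda>i. {s i, s (Suc i)}) in
      \<forall>i. e i \<in> tri_edges T \<and> e i \<noteq> e (Suc i) \<and>
          (\<exists>F G. F \<in> T \<and> G \<in> T \<and> e i \<union> e (Suc i) \<subseteq> F \<and>
                 e (Suc i) \<union> e (Suc (Suc i)) \<subseteq> G \<and> adjacent_faces T F G) \<and>
          e i \<inter> e (Suc (Suc i)) = {})"

text \<open>The (cyclic) zigzag is identified with the set of its consecutive vertex triples
  (invariant under shifting; each position in a period gives a distinct triple).\<close>
definition zigzag_of :: "(nat \<Rightarrow> 'v) \<Rightarrow> ('v \<times> 'v \<times> 'v) set" where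
  "zigzag_of s = {(s i, s (Suc i), s (Suc (Suc i))) | i. True}"

definition zigzags :: "'v set set \<Rightarrow> ('v \<times> 'v \<times> 'v) set set" where
  "zigzags T = {zigzag_of s | s. zigzag_seq T s}"

definition rev_zigzag :: "('v \<times> 'v \<times> 'v) set \<Rightarrow> ('v \<times> 'v \<times> 'v) set" where
  "rev_zigzag Z = (\<lambda>(a, b, c). (c, b, a)) ` Z"

definition z_orientation :: "'v set set \<Rightarrow> ('v \<times> 'v \<times> 'v) set set \<Rightarrow> bool" where
  "z_orientation T \<tau> \<longleftrightarrow> \<tau> \<subseteq> zigzags T \<and>
     (\<forall>Z\<in>zigzags T. (Z \<in> \<tau> \<or> rev_zigzag Z \<in> \<tau>) \<and>
                     (Z \<in> \<tau> \<and> rev_zigzag Z \<in> \<tau> \<longrightarrow> Z = rev_zigzag Z))"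

definition dir_count :: "('v \<times> 'v \<times> 'v) set set \<Rightarrow> 'v \<Rightarrow> 'v \<Rightarrow> nat" where
  "dir_count \<tau> u w = (\<Sum>Z\<in>\<tau>. card {t \<in> Z. fst t = u \<and> fst (snd t) = w})"

definition edge_type_II :: "('v \<times> 'v \<times> 'v) set set \<Rightarrow> 'v \<Rightarrow> 'v \<Rightarrow> bool" where
  "edge_type_II \<tau> u w \<longleftrightarrow>
     (dir_count \<tau> u w = 2 \<and> dir_count \<tau> w u = 0) \<or>
     (dir_count \<tau> w u = 2 \<and> dir_count \<tau> u w = 0)"

definition face_type_II :: "('v \<times> 'v \<times> 'v) set set \<Rightarrow> 'v set \<Rightarrow> bool" where
  "face_type_II \<tau> F \<longleftrightarrow> (\<forall>u\<in>F. \<forall>w\<in>F. u \<noteq> w \<longrightarrow> edge_type_II \<tau> u w)"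

definition all_faces_type_II :: "'v set set \<Rightarrow> ('v \<times> 'v \<times> 'v) set set \<Rightarrow> bool" where
  "all_faces_type_II T \<tau> \<longleftrightarrow> (\<forall>F\<in>T. face_type_II \<tau> F)"

text \<open>Connected sum along faces F, F' via the vertex bijection g : F \<rightarrow> F'
  (a special homeomorphism of the boundaries is determined, up to isotopy, by it).\<close>
definition glue_map :: "'a set \<Rightarrow> ('a \<Rightarrow> 'b) \<Rightarrow> 'b set \<Rightarrow> 'b \<Rightarrow> 'a + 'b" where
  "glue_map F g F' y = (if y \<in> F' then Inl (the_inv_into F g y) else Inr y)"

definition conn_sum :: "'a set set \<Rightarrow> 'b set set \<Rightarrow> 'a set \<Rightarrow> 'b set \<Rightarrow> ('a \<Rightarrow> 'b)
    \<Rightarrow> ('a + 'b) set set" where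
  "conn_sum T T' F F' g =
     (\<lambda>G. Inl ` G) ` (T - {F}) \<union> (\<lambda>G. glue_map F g F' ` G) ` (T' - {F'})"

end

theory Submission
  imports Defs
begin

locale fsurf =
  fixes S :: "'v set set"
  assumes finS: "finite S" and card3: "\<And>K. K \<in> S \<Longrightarrow> card K = 3"
    and edge2: "\<And>e. e \<in> tri_edges S \<Longrightarrow> card {K\<in>S. e \<subseteq> K} = 2"
begin

lemma face_distinct: assumes "{a,b,c} \<in> S" shows "a \<noteq> b \<and> b \<noteq> c \<and> a \<noteq> c"
proof -
  have "card {a,b,c} = 3" using card3 assms by blast
  then show ?thesis by (auto simp: card_insert_if split: if_splits)
qed

lemma third: assumes "K \<in> S" "u \<in> K" "w \<in> K" "u \<noteq> w"
  shows "\<exists>x. K = {u,w,x} \<and> x \<noteq> u \<and> x \<noteq> w"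
proof -
  have c: "card K = 3" using card3 assms(1) by blast
  then have fK: "finite K" by (metis card.infinite zero_neq_numeral)
  have "card (K - {u,w}) = 1" using c assms(2-4) fK by (simp add: card_Diff_subset)
  then obtain x where x: "K - {u,w} = {x}" by (metis One_nat_def card_1_singleton_iff)
  then have k: "K = {u,w,x}" using assms(2,3) by auto
  have "x \<noteq> u \<and> x \<noteq> w" using x by auto
  then show ?thesis using k by (intro exI[of _ x]) simp
qed

lemma edge_in: assumes "{a,b,c} \<in> S" shows "{a,b} \<in> tri_edges S"
proof -
  have "a \<noteq> b" using face_distinct[OF assms] by simp
  then have "card {a,b} = 2" by simp
  moreover have "{a,b} \<subseteq> {a,b,c}" by auto
  ultimately show ?thesis using assms unfolding tri_edges_def by auto
qed

lemma opp_ex1: assumes f: "{a,b,c} \<in> S" shows "\<exists>!x. {a,b,x} \<in> S \<and> x \<noteq> c"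
proof -
  have d: "a \<noteq> b" "b \<noteq> c" "a \<noteq> c" using face_distinct[OF f] by auto
  define C where "C = {K\<in>S. {a,b} \<subseteq> K}"
  have cC: "card C = 2" unfolding C_def using edge2[OF edge_in[OF f]] .
  have fC: "finite C" unfolding C_def using finS by auto
  have abc: "{a,b,c} \<in> C" unfolding C_def using f by auto
  have "\<not> C \<subseteq> {{a,b,c}}"
  proof
    assume "C \<subseteq> {{a,b,c}}"
    then have "card C \<le> card {{a,b,c}}" by (intro card_mono) auto
    then show False using cC by simp
  qed
  then obtain K where K: "K \<in> C" "K \<noteq> {a,b,c}" by auto
  then have KS: "K \<in> S" "a \<in> K" "b \<in> K" unfolding C_def by auto
  obtain x where x: "K = {a,b,x}" "x \<noteq> a" "x \<noteq> b" using third[OF KS d(1)] by auto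
  have xc: "x \<noteq> c" using x K by auto
  have ex: "{a,b,x} \<in> S \<and> x \<noteq> c" using x KS xc by auto
  show ?thesis
  proof (rule ex1I[of _ x])
    show "{a,b,x} \<in> S \<and> x \<noteq> c" by (rule ex)
  next
    fix y assume y: "{a,b,y} \<in> S \<and> y \<noteq> c"
    show "y = x"
    proof (rule ccontr)
      assume yx: "y \<noteq> x"
      have dy: "y \<noteq> a" "y \<noteq> b" using face_distinct[of a b y] y by auto
      have sub: "{{a,b,c},{a,b,x},{a,b,y}} \<subseteq> C" unfolding C_def using f ex y by auto
      have n1: "{a,b,c} \<noteq> {a,b,x}" using d x xc by auto
      have n2: "{a,b,c} \<noteq> {a,b,y}" using d dy y by auto
      have n3: "{a,b,x} \<noteq> {a,b,y}" using x dy yx by auto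
      have "card {{a,b,c},{a,b,x},{a,b,y}} = 3" using n1 n2 n3 by simp
      then have "3 \<le> card C" using card_mono[OF fC sub] by simp
      then show False using cC by simp
    qed
  qed
qed

definition opp where "opp a b c = (THE x. {a,b,x} \<in> S \<and> x \<noteq> c)"

lemma opp_face: assumes "{a,b,c} \<in> S" shows "{a,b,opp a b c} \<in> S" "opp a b c \<noteq> c"
  using theI'[OF opp_ex1[OF assms]] unfolding opp_def by auto

lemma opp_uniq: assumes "{a,b,c} \<in> S" "{a,b,x} \<in> S" "x \<noteq> c" shows "opp a b c = x"
  unfolding opp_def using the1_equality[OF opp_ex1[OF assms(1)]] assms by auto

lemma opp_opp: assumes "{a,b,c} \<in> S" shows "opp a b (opp a b c) = c"
  using opp_uniq[OF opp_face(1)[OF assms] assms] opp_face(2)[OF assms] by auto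

lemma opp_sym: "opp b a c = opp a b c"
  unfolding opp_def by (simp add: insert_commute)

definition flag :: "'v \<times> 'v \<times> 'v \<Rightarrow> bool" where
  "flag t \<longleftrightarrow> (case t of (a,b,c) \<Rightarrow> {a,b,c} \<in> S)"
definition stp :: "'v \<times> 'v \<times> 'v \<Rightarrow> 'v \<times> 'v \<times> 'v" where
  "stp t = (case t of (a,b,c) \<Rightarrow> (b,c,opp b c a))"
definition bck :: "'v \<times> 'v \<times> 'v \<Rightarrow> 'v \<times> 'v \<times> 'v" where
  "bck t = (case t of (a,b,c) \<Rightarrow> (opp a b c, a, b))"
definition orb :: "'v \<times> 'v \<times> 'v \<Rightarrow> ('v \<times> 'v \<times> 'v) set" where
  "orb t = range (\<lambda>n. (stp ^^ n) t)"

lemma flag_stp: "flag t \<Longrightarrow> flag (stp t)"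
proof (cases t)
  case (fields a b c)
  assume "flag t"
  then have "{b,c,a} \<in> S" using fields unfolding flag_def by (simp add: insert_commute)
  then show ?thesis using fields opp_face(1)[of b c a] unfolding flag_def stp_def by simp
qed

lemma flag_bck: "flag t \<Longrightarrow> flag (bck t)"
proof (cases t)
  case (fields a b c)
  assume "flag t"
  then have "{a,b,c} \<in> S" using fields unfolding flag_def by simp
  then have "{a,b,opp a b c} \<in> S" by (rule opp_face)
  then show ?thesis using fields unfolding flag_def bck_def by (simp add: insert_commute)
qed

lemma stp_bck: "flag t \<Longrightarrow> stp (bck t) = t"
proof (cases t)
  case (fields a b c)
  assume "flag t"
  then have "{a,b,c} \<in> S" using fields unfolding flag_def by simp
  then show ?thesis using fields opp_opp unfolding stp_def bck_def by simp
qed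

lemma bck_stp: "flag t \<Longrightarrow> bck (stp t) = t"
proof (cases t)
  case (fields a b c)
  assume "flag t"
  then have "{b,c,a} \<in> S" using fields unfolding flag_def by (simp add: insert_commute)
  then show ?thesis using fields opp_opp[of b c a] unfolding stp_def bck_def by simp
qed

lemma flag_funpow: "flag t \<Longrightarrow> flag ((stp ^^ n) t)"
  by (induction n) (auto intro: flag_stp)

lemma bck_funpow_stp: "flag t \<Longrightarrow> (bck ^^ n) ((stp ^^ n) t) = t"
proof (induction n)
  case 0 then show ?case by simp
next
  case (Suc n)
  have "(bck ^^ Suc n) ((stp ^^ Suc n) t) = (bck ^^ n) (bck ((stp ^^ Suc n) t))"
    by (simp only: funpow_Suc_right comp_apply)
  also have "\<dots> = (bck ^^ n) (bck (stp ((stp ^^ n) t)))" by simp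
  also have "\<dots> = (bck ^^ n) ((stp ^^ n) t)" using bck_stp[OF flag_funpow[OF Suc.prems]] by simp
  finally show ?case using Suc by simp
qed

lemma finite_flags: "finite {t. flag t}"
proof -
  have "{t. flag t} \<subseteq> \<Union>S \<times> \<Union>S \<times> \<Union>S" unfolding flag_def by auto
  moreover have "finite (\<Union>S)"
  proof -
    have "\<forall>K\<in>S. finite K" using card3 by (metis card.infinite zero_neq_numeral)
    then show ?thesis using finS by simp
  qed
  ultimately show ?thesis by (meson finite_SigmaI finite_subset)
qed

lemma period: assumes "flag t" shows "\<exists>p>0. (stp ^^ p) t = t"
proof -
  have "range (\<lambda>n. (stp ^^ n) t) \<subseteq> {t. flag t}" using flag_funpow[OF assms] by auto
  then have "finite (range (\<lambda>n. (stp ^^ n) t))" using finite_flags finite_subset by blast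
  then have "\<not> inj (\<lambda>n. (stp ^^ n) t)" using finite_imageD by fastforce
  then obtain i j where ij: "(stp ^^ i) t = (stp ^^ j) t" "i \<noteq> j" unfolding inj_def by auto
  have key: "(stp ^^ (j - i)) t = t" if "i < j" "(stp ^^ i) t = (stp ^^ j) t" for i j
  proof -
    have "(stp ^^ j) t = (stp ^^ i) ((stp ^^ (j - i)) t)"
      using that(1) by (metis funpow_add le_add_diff_inverse less_imp_le comp_apply)
    then have "(bck ^^ i) ((stp ^^ i) t) = (bck ^^ i) ((stp ^^ i) ((stp ^^ (j - i)) t))" using that(2) by simp
    then show ?thesis using bck_funpow_stp[OF assms] bck_funpow_stp[OF flag_funpow[OF assms]] by simp
  qed
  show ?thesis
  proof (cases "i < j")
    case True then show ?thesis using key[OF True ij(1)] by (intro exI[of _ "j - i"]) simp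
  next
    case False then have "j < i" using ij(2) by simp
    then show ?thesis using key[OF \<open>j < i\<close> ij(1)[symmetric]] by (intro exI[of _ "i - j"]) simp
  qed
qed

lemma funpow_period: "(stp ^^ p) t = t \<Longrightarrow> (stp ^^ (p * k)) t = t"
proof (induction k)
  case 0 then show ?case by simp
next
  case (Suc k)
  have "(stp ^^ (p * Suc k)) t = (stp ^^ p) ((stp ^^ (p * k)) t)"
    by (simp add: funpow_add)
  then show ?case using Suc by simp
qed

lemma in_orb_back: assumes "flag t" "x \<in> orb t" shows "t \<in> orb x"
proof -
  obtain n where x: "x = (stp ^^ n) t" using assms(2) unfolding orb_def by auto
  obtain p where p: "p > 0" "(stp ^^ p) t = t" using period[OF assms(1)] by auto
  have le: "n \<le> p * n" using p(1) by simp
  have "(stp ^^ (p * n - n)) x = (stp ^^ (p * n - n + n)) t" using x by (simp add: funpow_add)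
  also have "\<dots> = t" using le funpow_period[OF p(2)] by simp
  finally show ?thesis unfolding orb_def by (metis rangeI)
qed

lemma orb_sub: assumes "x \<in> orb t" shows "orb x \<subseteq> orb t"
proof
  fix y assume "y \<in> orb x"
  then obtain m where y: "y = (stp ^^ m) x" unfolding orb_def by auto
  obtain n where x: "x = (stp ^^ n) t" using assms unfolding orb_def by auto
  have "y = (stp ^^ (m + n)) t" using x y by (simp add: funpow_add)
  then show "y \<in> orb t" unfolding orb_def by auto
qed

lemma orb_eq: "flag t \<Longrightarrow> x \<in> orb t \<Longrightarrow> orb x = orb t"
  using orb_sub in_orb_back by (meson subset_antisym)

lemma self_orb: "t \<in> orb t"
  unfolding orb_def by (metis funpow_0 rangeI)

lemma orb_flag: "flag t \<Longrightarrow> x \<in> orb t \<Longrightarrow> flag x"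
  using flag_funpow[of t] unfolding orb_def by auto

end

context fsurf begin
lemma sub3: assumes "K \<in> S" "{a,b,c} \<subseteq> K" "a \<noteq> b" "b \<noteq> c" "a \<noteq> c" shows "K = {a,b,c}"
proof -
  have c: "card K = 3" using card3 assms(1) by blast
  then have fK: "finite K" by (metis card.infinite zero_neq_numeral)
  have "card {a,b,c} = 3" using assms(3-5) by simp
  then show ?thesis using card_subset_eq[OF fK assms(2)] c by simp
qed

definition trip :: "(nat \<Rightarrow> 'v) \<Rightarrow> nat \<Rightarrow> 'v \<times> 'v \<times> 'v" where
  "trip s i = (s i, s (Suc i), s (Suc (Suc i)))"

lemma zz_step: assumes "zigzag_seq S s"
  shows "flag (trip s i) \<and> trip s (Suc i) = stp (trip s i)"
proof -
  define a b c d where "a = s i" "b = s (Suc i)" "c = s (Suc (Suc i))" "d = s (Suc (Suc (Suc i)))"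
  have z: "\<forall>i. {s i, s (Suc i)} \<in> tri_edges S \<and> {s i, s (Suc i)} \<noteq> {s (Suc i), s (Suc (Suc i))} \<and>
          (\<exists>F G. F \<in> S \<and> G \<in> S \<and> {s i, s (Suc i)} \<union> {s (Suc i), s (Suc (Suc i))} \<subseteq> F \<and>
                 {s (Suc i), s (Suc (Suc i))} \<union> {s (Suc (Suc i)), s (Suc (Suc (Suc i)))} \<subseteq> G \<and> adjacent_faces S F G) \<and>
          {s i, s (Suc i)} \<inter> {s (Suc (Suc i)), s (Suc (Suc (Suc i)))} = {}"
    using assms unfolding zigzag_seq_def Let_def by simp
  have e1: "card {a,b} = 2" using z[rule_format, of i] unfolding a_b_c_d_def tri_edges_def by simp
  have e2: "card {b,c} = 2" using z[rule_format, of "Suc i"] unfolding a_b_c_d_def tri_edges_def by simp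
  have e3: "card {c,d} = 2" using z[rule_format, of "Suc (Suc i)"] unfolding a_b_c_d_def tri_edges_def by simp
  have ne: "{a,b} \<noteq> {b,c}" using z[rule_format, of i] unfolding a_b_c_d_def by simp
  have dj: "{a,b} \<inter> {c,d} = {}" using z[rule_format, of i] unfolding a_b_c_d_def by simp
  have h: "\<exists>F G. F \<in> S \<and> G \<in> S \<and> {a,b} \<union> {b,c} \<subseteq> F \<and> {b,c} \<union> {c,d} \<subseteq> G \<and> adjacent_faces S F G"
    using conjunct1[OF conjunct2[OF conjunct2[OF z[rule_format, of i]]]] unfolding a_b_c_d_def .
  obtain F G where FG: "F \<in> S" "G \<in> S" "{a,b} \<union> {b,c} \<subseteq> F" "{b,c} \<union> {c,d} \<subseteq> G"
    using h by (elim exE conjE) simp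
  have ab: "a \<noteq> b" using e1 by (cases "a = b") auto
  have bc: "b \<noteq> c" using e2 by (cases "b = c") auto
  have cd: "c \<noteq> d" using e3 by (cases "c = d") auto
  have ac: "a \<noteq> c" using ne by auto
  have ad: "a \<noteq> d" "b \<noteq> d" using dj by auto
  have F: "F = {a,b,c}" using sub3[OF FG(1) _ ab bc ac] FG(3) by auto
  have G: "G = {b,c,d}" using sub3[OF FG(2) _ bc cd ad(2)] FG(4) by auto
  have fl: "{a,b,c} \<in> S" using F FG(1) by simp
  have "{b,c,a} \<in> S" using fl by (simp add: insert_commute)
  then have "opp b c a = d" using opp_uniq[of b c a d] G FG(2) ad(1) by auto
  then show ?thesis using fl unfolding trip_def flag_def stp_def a_b_c_d_def by simp
qed

lemma zz_trip: assumes "zigzag_seq S s" shows "trip s n = (stp ^^ n) (trip s 0)"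
proof (induction n)
  case 0 then show ?case by simp
next
  case (Suc n) then show ?case using zz_step[OF assms, of n] by simp
qed

lemma zz_orb: assumes "zigzag_seq S s" shows "zigzag_of s = orb (trip s 0)" "flag (trip s 0)"
proof -
  have "zigzag_of s = range (trip s)" unfolding zigzag_of_def trip_def by auto
  also have "\<dots> = orb (trip s 0)"
  proof -
    have "trip s = (\<lambda>n. (stp ^^ n) (trip s 0))" by (rule ext) (rule zz_trip[OF assms])
    then show ?thesis unfolding orb_def by metis
  qed
  finally show "zigzag_of s = orb (trip s 0)" .
  show "flag (trip s 0)" using zz_step[OF assms] by simp
qed

lemma stp_fst: "fst (stp x) = fst (snd x)" "fst (snd (stp x)) = snd (snd x)"
  by (cases x; simp add: stp_def)+

lemma orb_zz: assumes "flag t"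
  shows "zigzag_seq S (\<lambda>n. fst ((stp ^^ n) t))" "zigzag_of (\<lambda>n. fst ((stp ^^ n) t)) = orb t"
proof -
  define sq where "sq = (\<lambda>n. fst ((stp ^^ n) t))"
  have tr: "trip sq n = (stp ^^ n) t" for n
    unfolding trip_def sq_def by (simp add: stp_fst)
  show "zigzag_of (\<lambda>n. fst ((stp ^^ n) t)) = orb t"
    unfolding sq_def[symmetric] zigzag_of_def orb_def using tr unfolding trip_def by auto
  have "{sq i, sq (Suc i)} \<in> tri_edges S \<and> {sq i, sq (Suc i)} \<noteq> {sq (Suc i), sq (Suc (Suc i))} \<and>
          (\<exists>F G. F \<in> S \<and> G \<in> S \<and> {sq i, sq (Suc i)} \<union> {sq (Suc i), sq (Suc (Suc i))} \<subseteq> F \<and>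
                 {sq (Suc i), sq (Suc (Suc i))} \<union> {sq (Suc (Suc i)), sq (Suc (Suc (Suc i)))} \<subseteq> G \<and> adjacent_faces S F G) \<and>
          {sq i, sq (Suc i)} \<inter> {sq (Suc (Suc i)), sq (Suc (Suc (Suc i)))} = {}" for i
  proof -
    obtain a b c where X: "(stp ^^ i) t = (a,b,c)" by (cases "(stp ^^ i) t") auto
    have fl: "{a,b,c} \<in> S" using flag_funpow[OF assms, of i] X unfolding flag_def by simp
    have d3: "a \<noteq> b" "b \<noteq> c" "a \<noteq> c" using face_distinct[OF fl] by auto
    define d where "d = opp b c a"
    have fl2: "{b,c,a} \<in> S" using fl by (simp add: insert_commute)
    have G: "{b,c,d} \<in> S" "d \<noteq> a" using opp_face[OF fl2] unfolding d_def by auto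
    have d4: "d \<noteq> b" "d \<noteq> c" using face_distinct[OF G(1)] by auto
    have t1: "trip sq i = (a,b,c)" using tr X by simp
    have t2: "trip sq (Suc i) = (b,c,d)" using tr[of "Suc i"] X unfolding d_def by (simp add: stp_def)
    have s: "sq i = a" "sq (Suc i) = b" "sq (Suc (Suc i)) = c" "sq (Suc (Suc (Suc i))) = d"
      using t1 t2 unfolding trip_def by auto
    have adj: "adjacent_faces S {a,b,c} {b,c,d}"
    proof -
      have "{a,b,c} \<inter> {b,c,d} = {b,c}" using d3 G(2) d4 by auto
      moreover have "{b,c} \<in> tri_edges S" using edge_in[OF fl2] .
      moreover have "{a,b,c} \<noteq> {b,c,d}" using d3 G(2) by auto
      ultimately show ?thesis unfolding adjacent_faces_def using fl G(1) by simp
    qed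
    show ?thesis unfolding s using edge_in[OF fl] d3 adj fl G d4
      by (intro conjI exI[of _ "{a,b,c}"] exI[of _ "{b,c,d}"]) auto
  qed
  then show "zigzag_seq S (\<lambda>n. fst ((stp ^^ n) t))" unfolding sq_def[symmetric] zigzag_seq_def Let_def by blast
qed

lemma zigzags_eq: "zigzags S = orb ` {t. flag t}"
proof
  show "zigzags S \<subseteq> orb ` {t. flag t}" unfolding zigzags_def using zz_orb by blast
  show "orb ` {t. flag t} \<subseteq> zigzags S" unfolding zigzags_def using orb_zz by blast
qed

definition rv :: "'v \<times> 'v \<times> 'v \<Rightarrow> 'v \<times> 'v \<times> 'v" where "rv = (\<lambda>(a,b,c). (c,b,a))"

lemma rev_zz_rv: "rev_zigzag Z = rv ` Z"
  unfolding rev_zigzag_def rv_def ..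

lemma rv_rv: "rv (rv x) = x" unfolding rv_def by (cases x) auto

lemma flag_rv: "flag x \<Longrightarrow> flag (rv x)"
  unfolding rv_def flag_def by (cases x) (auto simp: insert_commute)

lemma rv_stp: "flag x \<Longrightarrow> rv (stp x) = bck (rv x)"
  unfolding rv_def stp_def bck_def by (cases x) (simp add: opp_sym)

lemma rv_funpow: "flag x \<Longrightarrow> rv ((stp ^^ n) x) = (bck ^^ n) (rv x)"
proof (induction n)
  case 0 then show ?case by simp
next
  case (Suc n)
  have "rv ((stp ^^ Suc n) x) = bck (rv ((stp ^^ n) x))"
    using rv_stp[OF flag_funpow[OF Suc.prems, of n]] by simp
  then show ?case using Suc by simp
qed

lemma bck_in_orb: assumes "flag y" shows "(bck ^^ n) y \<in> orb y"
proof -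
  obtain p where p: "p > 0" "(stp ^^ p) y = y" using period[OF assms] by auto
  define z where "z = (stp ^^ (p * n - n)) y"
  have le: "n \<le> p * n" using p(1) by simp
  have "(stp ^^ n) z = (stp ^^ (n + (p * n - n))) y" unfolding z_def by (simp add: funpow_add)
  also have "\<dots> = y" using le funpow_period[OF p(2)] by simp
  finally have "(bck ^^ n) y = (bck ^^ n) ((stp ^^ n) z)" by simp
  also have "\<dots> = z" using bck_funpow_stp[OF flag_funpow[OF assms]] unfolding z_def by simp
  finally show ?thesis unfolding z_def orb_def by simp
qed

lemma rv_orb_sub: assumes "flag t" shows "rv ` orb t \<subseteq> orb (rv t)"
proof
  fix x assume "x \<in> rv ` orb t"
  then obtain n where x: "x = rv ((stp ^^ n) t)" unfolding orb_def by auto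
  then have "x = (bck ^^ n) (rv t)" using rv_funpow[OF assms] by simp
  then show "x \<in> orb (rv t)" using bck_in_orb[OF flag_rv[OF assms]] by simp
qed

lemma rv_orb: assumes "flag t" shows "rv ` orb t = orb (rv t)"
proof
  show "rv ` orb t \<subseteq> orb (rv t)" by (rule rv_orb_sub[OF assms])
  have "rv ` orb (rv t) \<subseteq> orb t" using rv_orb_sub[OF flag_rv[OF assms]] by (simp add: rv_rv)
  then have "rv ` rv ` orb (rv t) \<subseteq> rv ` orb t" by (rule image_mono)
  then show "orb (rv t) \<subseteq> rv ` orb t" by (simp add: image_image rv_rv)
qed

lemma finite_zigzags: "finite (zigzags S)"
proof -
  have "zigzags S \<subseteq> Pow {t. flag t}" unfolding zigzags_eq by (auto intro: orb_flag)
  then show ?thesis using finite_flags by (meson finite_Pow_iff finite_subset)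
qed

lemma zz_flag: "Z \<in> zigzags S \<Longrightarrow> x \<in> Z \<Longrightarrow> flag x"
  unfolding zigzags_eq by (auto intro: orb_flag)

lemma finite_zz: "Z \<in> zigzags S \<Longrightarrow> finite Z"
  proof -
  assume "Z \<in> zigzags S"
  then have "Z \<subseteq> {t. flag t}" using zz_flag by auto
  then show "finite Z" using finite_flags finite_subset by auto
qed

lemma flag_in_zz: "flag t \<Longrightarrow> orb t \<in> zigzags S"
  unfolding zigzags_eq by simp

lemma rev_zz_in: "Z \<in> zigzags S \<Longrightarrow> rev_zigzag Z \<in> zigzags S"
  unfolding zigzags_eq rev_zz_rv using rv_orb flag_rv by auto
end

definition good_face :: "('v \<times> 'v) set \<Rightarrow> 'v set \<Rightarrow> bool" where
  "good_face D K \<longleftrightarrow> (\<forall>x\<in>K. \<forall>y\<in>K. x \<noteq> y \<longrightarrow> ((x,y) \<in> D \<longleftrightarrow> (y,x) \<notin> D)) \<and>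
     (\<forall>a b c. K = {a,b,c} \<longrightarrow> (a,b) \<in> D \<longrightarrow> (b,c) \<in> D)"

definition good_on :: "'v set set \<Rightarrow> ('v \<times> 'v) set \<Rightarrow> bool" where
  "good_on S D \<longleftrightarrow> (\<forall>K\<in>S. good_face D K)"

context fsurf begin

lemma good_D1: assumes "good_on S D" "{a,b,c} \<in> S" shows "(a,b) \<in> D \<longleftrightarrow> (b,a) \<notin> D"
  using assms face_distinct[OF assms(2)] unfolding good_on_def good_face_def by auto

lemma good_D2: assumes "good_on S D" "{a,b,c} \<in> S" "(a,b) \<in> D" shows "(b,c) \<in> D"
  using assms unfolding good_on_def good_face_def by metis

lemma follow: assumes g: "good_on S D" and t: "flag t" "(fst t, fst (snd t)) \<in> D" and x: "x \<in> orb t"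
  shows "(fst x, fst (snd x)) \<in> D"
proof -
  have "(fst ((stp ^^ n) t), fst (snd ((stp ^^ n) t))) \<in> D" for n
  proof (induction n)
    case 0 then show ?case using t by simp
  next
    case (Suc n)
    obtain a b c where X: "(stp ^^ n) t = (a,b,c)" by (cases "(stp ^^ n) t") auto
    have fl: "{a,b,c} \<in> S" using flag_funpow[OF t(1), of n] X unfolding flag_def by simp
    have "(a,b) \<in> D" using Suc X by simp
    then have "(b,c) \<in> D" using good_D2[OF g fl] by simp
    then show ?case using X by (simp add: stp_fst)
  qed
  then show ?thesis using x unfolding orb_def by auto
qed

definition sigma :: "('v \<times> 'v) set \<Rightarrow> ('v \<times> 'v \<times> 'v) set set" where
  "sigma D = {Z \<in> zigzags S. \<forall>x\<in>Z. (fst x, fst (snd x)) \<in> D}"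

lemma zz_same: assumes "Z \<in> zigzags S" "x \<in> Z" shows "orb x = Z"
proof -
  obtain t where "flag t" "Z = orb t" using assms(1) unfolding zigzags_eq by auto
  then show ?thesis using orb_eq assms(2) by simp
qed

lemma orb_in_sigma: assumes "good_on S D" "flag t" "(fst t, fst (snd t)) \<in> D"
  shows "orb t \<in> sigma D"
  unfolding sigma_def using flag_in_zz[OF assms(2)] follow[OF assms] by auto

lemma sigma_zorient: assumes g: "good_on S D" shows "z_orientation S (sigma D)"
  unfolding z_orientation_def
proof (intro conjI ballI)
  show "sigma D \<subseteq> zigzags S" unfolding sigma_def by auto
next
  fix Z assume Z: "Z \<in> zigzags S"
  obtain t where t: "flag t" "Z = orb t" using Z unfolding zigzags_eq by auto
  obtain a b c where abc: "t = (a,b,c)" by (cases t) auto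
  have fl: "{a,b,c} \<in> S" using t(1) abc unfolding flag_def by simp
  have rvt: "rv t = (c,b,a)" using abc unfolding rv_def by simp
  have revZ: "rev_zigzag Z = orb (c,b,a)" unfolding rev_zz_rv t(2) using rv_orb[OF t(1)] rvt by simp
  have flr: "flag (c,b,a)" using flag_rv[OF t(1)] rvt by simp
  show "Z \<in> sigma D \<or> rev_zigzag Z \<in> sigma D"
  proof (cases "(a,b) \<in> D")
    case True
    then show ?thesis using orb_in_sigma[OF g t(1)] abc t(2) by simp
  next
    case False
    then have ba: "(b,a) \<in> D" using good_D1[OF g fl] by simp
    have f2: "{b,a,c} \<in> S" using fl by (simp add: insert_commute)
    have ac: "(a,c) \<in> D" using good_D2[OF g f2 ba] .
    have f3: "{a,c,b} \<in> S" using fl by (simp add: insert_commute)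
    have "(c,b) \<in> D" using good_D2[OF g f3 ac] .
    then show ?thesis using orb_in_sigma[OF g flr] revZ by simp
  qed
  show "Z \<in> sigma D \<and> rev_zigzag Z \<in> sigma D \<longrightarrow> Z = rev_zigzag Z"
  proof
    assume both: "Z \<in> sigma D \<and> rev_zigzag Z \<in> sigma D"
    have "t \<in> Z" using t(2) self_orb by simp
    have "stp t \<in> Z" using t(2) unfolding orb_def by (metis funpow_0 funpow.simps(2) o_apply rangeI)
    then have "(b,c) \<in> D" using both abc unfolding sigma_def by (auto simp: stp_def)
    moreover have "(c,b,a) \<in> rev_zigzag Z" using revZ self_orb by simp
    then have "(c,b) \<in> D" using both unfolding sigma_def by auto
    moreover have "{b,c,a} \<in> S" using fl by (simp add: insert_commute)
    ultimately show "Z = rev_zigzag Z" using good_D1[OF g, of b c a] by simp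
  qed
qed

lemma cnt0: assumes "(w,u) \<notin> D" shows "dir_count (sigma D) w u = 0"
proof -
  have "\<forall>Z\<in>sigma D. card {t \<in> Z. fst t = w \<and> fst (snd t) = u} = 0"
  proof
    fix Z assume "Z \<in> sigma D"
    then have "{t \<in> Z. fst t = w \<and> fst (snd t) = u} = {}"
      using assms unfolding sigma_def by auto
    then show "card {t \<in> Z. fst t = w \<and> fst (snd t) = u} = 0" by (simp only: card.empty)
  qed
  then show ?thesis unfolding dir_count_def by (rule sum.neutral)
qed

lemma cnt2: assumes g: "good_on S D" and uw: "(u,w) \<in> D" and f: "{u,w,x} \<in> S"
  shows "dir_count (sigma D) u w = 2"
proof -
  define P where "P Z = {t \<in> Z. fst t = u \<and> fst (snd t) = w}" for Z :: "('v \<times> 'v \<times> 'v) set"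
  have finz: "finite (sigma D)" using finite_zigzags unfolding sigma_def by auto
  have finP: "\<forall>Z\<in>sigma D. finite (P Z)" unfolding P_def sigma_def using finite_zz by auto
  have disj: "\<forall>Z1\<in>sigma D. \<forall>Z2\<in>sigma D. Z1 \<noteq> Z2 \<longrightarrow> P Z1 \<inter> P Z2 = {}"
  proof (intro ballI impI)
    fix Z1 Z2 assume Z: "Z1 \<in> sigma D" "Z2 \<in> sigma D" "Z1 \<noteq> Z2"
    show "P Z1 \<inter> P Z2 = {}"
    proof (rule ccontr)
      assume "P Z1 \<inter> P Z2 \<noteq> {}"
      then obtain y where y: "y \<in> Z1" "y \<in> Z2" unfolding P_def by auto
      have z1: "Z1 \<in> zigzags S" "Z2 \<in> zigzags S" using Z unfolding sigma_def by auto
      have "orb y = Z1" using zz_same[OF z1(1) y(1)] .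
      moreover have "orb y = Z2" using zz_same[OF z1(2) y(2)] .
      ultimately show False using Z(3) by simp
    qed
  qed
  define y where "y = opp u w x"
  have fy: "{u,w,y} \<in> S" "y \<noteq> x" using opp_face[OF f] unfolding y_def by auto
  have U: "(\<Union>Z\<in>sigma D. P Z) = {(u,w,x),(u,w,y)}"
  proof
    show "(\<Union>Z\<in>sigma D. P Z) \<subseteq> {(u,w,x),(u,w,y)}"
    proof
      fix t assume "t \<in> (\<Union>Z\<in>sigma D. P Z)"
      then obtain Z where Z: "Z \<in> sigma D" "t \<in> Z" "fst t = u" "fst (snd t) = w" unfolding P_def by auto
      obtain a b c where abc: "t = (a,b,c)" by (cases t) auto
      have "Z \<in> zigzags S" using Z(1) unfolding sigma_def by simp
      then have "flag t" using zz_flag Z(2) by metis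
      then have ft: "{u,w,c} \<in> S" using Z(3,4) abc unfolding flag_def by simp
      have "c = x \<or> c = y"
      proof (cases "c = x")
        case False
        then show ?thesis using opp_uniq[OF f ft] unfolding y_def by simp
      qed simp
      then show "t \<in> {(u,w,x),(u,w,y)}" using Z(3,4) abc by auto
    qed
  next
    have "flag (u,w,x)" "flag (u,w,y)" using f fy unfolding flag_def by auto
    then have "orb (u,w,x) \<in> sigma D" "orb (u,w,y) \<in> sigma D"
      using orb_in_sigma[OF g] uw by auto
    moreover have "(u,w,x) \<in> P (orb (u,w,x))" "(u,w,y) \<in> P (orb (u,w,y))"
      using self_orb unfolding P_def by auto
    ultimately show "{(u,w,x),(u,w,y)} \<subseteq> (\<Union>Z\<in>sigma D. P Z)" by auto
  qed
  have "dir_count (sigma D) u w = (\<Sum>Z\<in>sigma D. card (P Z))" unfolding dir_count_def P_def ..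
  also have "\<dots> = card (\<Union>Z\<in>sigma D. P Z)" using card_UN_disjoint[OF finz finP disj] by simp
  also have "\<dots> = 2" using U fy(2) by simp
  finally show ?thesis .
qed

lemma sigma_typeII: assumes g: "good_on S D" shows "all_faces_type_II S (sigma D)"
  unfolding all_faces_type_II_def face_type_II_def
proof (intro ballI impI)
  fix K u w assume K: "K \<in> S" "u \<in> K" "w \<in> K" "u \<noteq> w"
  obtain x where x: "K = {u,w,x}" using third[OF K] by auto
  have f1: "{u,w,x} \<in> S" using K(1) x by simp
  have f2: "{w,u,x} \<in> S" using f1 by (simp add: insert_commute)
  show "edge_type_II (sigma D) u w"
  proof (cases "(u,w) \<in> D")
    case True
    then have "(w,u) \<notin> D" using good_D1[OF g f1] by simp
    then show ?thesis unfolding edge_type_II_def using cnt2[OF g True f1] cnt0 by simp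
  next
    case False
    then have "(w,u) \<in> D" using good_D1[OF g f1] by simp
    then show ?thesis unfolding edge_type_II_def using cnt2[OF g _ f2] cnt0[OF False] by simp
  qed
qed


lemma cnt_pos: assumes "finite \<tau>" "Z \<in> \<tau>" "finite Z" "(x,y,z) \<in> Z"
  shows "1 \<le> dir_count \<tau> x y"
proof -
  have "{t \<in> Z. fst t = x \<and> fst (snd t) = y} \<noteq> {}" using assms(4) by force
  moreover have "finite {t \<in> Z. fst t = x \<and> fst (snd t) = y}" using assms(3) by simp
  ultimately have "1 \<le> card {t \<in> Z. fst t = x \<and> fst (snd t) = y}"
    by (simp add: Suc_le_eq card_gt_0_iff)
  also have "\<dots> \<le> dir_count \<tau> x y" unfolding dir_count_def
    by (rule member_le_sum[OF assms(2) _ assms(1)]) simp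
  finally show ?thesis .
qed

lemma orient_good: assumes zo: "z_orientation S \<tau>" and ty: "all_faces_type_II S \<tau>"
  shows "good_on S {(x,y). dir_count \<tau> x y = 2 \<and> dir_count \<tau> y x = 0}"
proof -
  define D where "D = {(x,y). dir_count \<tau> x y = 2 \<and> dir_count \<tau> y x = 0}"
  have sub: "\<tau> \<subseteq> zigzags S" using zo unfolding z_orientation_def by simp
  have fint: "finite \<tau>" using finite_subset[OF sub finite_zigzags] .
  have et: "edge_type_II \<tau> x y" if "{x,y,z} \<in> S" for x y z
  proof -
    have "x \<noteq> y" using face_distinct[OF that] by simp
    then show ?thesis using ty that unfolding all_faces_type_II_def face_type_II_def by auto
  qed
  have D1: "(x,y) \<in> D \<longleftrightarrow> (y,x) \<notin> D" if "{x,y,z} \<in> S" for x y z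
    using et[OF that] unfolding edge_type_II_def D_def by auto
  have pos: "(x,y) \<in> D" if "{x,y,z} \<in> S" "Z \<in> \<tau>" "(x,y,z) \<in> Z" for x y z Z
  proof -
    have "finite Z" using finite_zz sub that(2) by auto
    then have "1 \<le> dir_count \<tau> x y" using cnt_pos[OF fint that(2) _ that(3)] by simp
    then show ?thesis using et[OF that(1)] unfolding edge_type_II_def D_def by auto
  qed
  have C: "(x,y) \<in> D \<or> (z,y) \<in> D" if "{x,y,z} \<in> S" for x y z
  proof -
    have fl: "flag (x,y,z)" using that unfolding flag_def by simp
    have Z0: "orb (x,y,z) \<in> zigzags S" using flag_in_zz[OF fl] .
    have "orb (x,y,z) \<in> \<tau> \<or> rev_zigzag (orb (x,y,z)) \<in> \<tau>"
      using zo Z0 unfolding z_orientation_def by blast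
    then show ?thesis
    proof
      assume "orb (x,y,z) \<in> \<tau>"
      then show ?thesis using pos[OF that _ self_orb] by simp
    next
      assume r: "rev_zigzag (orb (x,y,z)) \<in> \<tau>"
      have "rv (x,y,z) \<in> rev_zigzag (orb (x,y,z))" unfolding rev_zz_rv using self_orb by simp
      then have m: "(z,y,x) \<in> rev_zigzag (orb (x,y,z))" unfolding rv_def by simp
      have "{z,y,x} \<in> S" using that by (simp add: insert_commute)
      then show ?thesis using pos[OF _ r m] by simp
    qed
  qed
  have "good_face D K" if K: "K \<in> S" for K
    unfolding good_face_def
  proof (intro conjI ballI impI allI)
    fix x y assume xy: "x \<in> K" "y \<in> K" "x \<noteq> y"
    obtain z where "K = {x,y,z}" using third[OF K xy] by auto
    then show "(x,y) \<in> D \<longleftrightarrow> (y,x) \<notin> D" using D1[of x y z] K by simp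
  next
    fix a b c assume abc: "K = {a,b,c}" "(a,b) \<in> D"
    have f: "{a,b,c} \<in> S" using abc K by simp
    show "(b,c) \<in> D"
    proof (rule ccontr)
      assume nbc: "(b,c) \<notin> D"
      have fbc: "{b,c,a} \<in> S" using f by (simp add: insert_commute)
      have fac: "{a,c,b} \<in> S" using f by (simp add: insert_commute)
      have fba: "{b,a,c} \<in> S" using f by (simp add: insert_commute)
      have nba: "(b,a) \<notin> D" using D1[OF f] abc(2) by simp
      show False
      proof (cases "(a,c) \<in> D")
        case True
        then have "(c,a) \<notin> D" using D1[OF fac] by simp
        then show False using C[OF fba] nba by simp
      next
        case False
        then show False using C[OF fbc] nbc by simp
      qed
    qed
  qed
  then show ?thesis unfolding good_on_def D_def by simp
qed

end

lemma gf_D1: "good_face D K \<Longrightarrow> x \<in> K \<Longrightarrow> y \<in> K \<Longrightarrow> x \<noteq> y \<Longrightarrow> ((x,y) \<in> D \<longleftrightarrow> (y,x) \<notin> D)"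
  unfolding good_face_def by blast

lemma gf_D2: "good_face D K \<Longrightarrow> K = {a,b,c} \<Longrightarrow> (a,b) \<in> D \<Longrightarrow> (b,c) \<in> D"
  unfolding good_face_def by blast

lemma card3_distinct: "card {a,b,c} = 3 \<Longrightarrow> a \<noteq> b \<and> b \<noteq> c \<and> a \<noteq> c"
  by (auto simp: card_insert_if split: if_splits)

lemma good_conv: assumes "good_on S D" shows "good_on S (D\<inverse>)"
  unfolding good_on_def good_face_def
proof (intro ballI conjI allI impI)
  fix K x y assume K: "K \<in> S" "x \<in> K" "y \<in> K" "x \<noteq> y"
  have "good_face D K" using assms K(1) unfolding good_on_def by simp
  then have "\<forall>x\<in>K. \<forall>y\<in>K. x \<noteq> y \<longrightarrow> ((x,y) \<in> D \<longleftrightarrow> (y,x) \<notin> D)"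
    unfolding good_face_def by (rule conjunct1)
  then have "(x,y) \<in> D \<longleftrightarrow> (y,x) \<notin> D" using K(2-4) by blast
  then show "((x,y) \<in> D\<inverse>) = ((y,x) \<notin> D\<inverse>)" by auto
next
  fix K a b c assume K: "K \<in> S" "K = {a,b,c}" "(a,b) \<in> D\<inverse>"
  have "good_face D K" using assms K(1) unfolding good_on_def by simp
  then have g0: "\<forall>x y z. K = {x,y,z} \<longrightarrow> (x,y) \<in> D \<longrightarrow> (y,z) \<in> D"
    unfolding good_face_def by (rule conjunct2)
  have g: "\<And>x y z. K = {x,y,z} \<Longrightarrow> (x,y) \<in> D \<Longrightarrow> (y,z) \<in> D" using g0 by blast
  have "K = {b,a,c}" using K(2) by (simp add: insert_commute)
  then have ac: "(a,c) \<in> D" using g[OF _ K(3)[simplified]] by simp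
  have "K = {a,c,b}" using K(2) by (simp add: insert_commute)
  then have "(c,b) \<in> D" using g[OF _ ac] by simp
  then show "(b,c) \<in> D\<inverse>" by simp
qed

lemma cyc: assumes g: "good_face D K" and K: "K = {a,b,c}" "a \<noteq> b" "b \<noteq> c" "a \<noteq> c" and ab: "(a,b) \<in> D"
  shows "(b,c) \<in> D \<and> (c,a) \<in> D \<and> (b,a) \<notin> D \<and> (c,b) \<notin> D \<and> (a,c) \<notin> D"
proof -
  have g0: "\<forall>x y z. K = {x,y,z} \<longrightarrow> (x,y) \<in> D \<longrightarrow> (y,z) \<in> D"
    using g unfolding good_face_def by (rule conjunct2)
  have D2: "\<And>x y z. K = {x,y,z} \<Longrightarrow> (x,y) \<in> D \<Longrightarrow> (y,z) \<in> D" using g0 by blast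
  have g1: "\<forall>x\<in>K. \<forall>y\<in>K. x \<noteq> y \<longrightarrow> ((x,y) \<in> D \<longleftrightarrow> (y,x) \<notin> D)"
    using g unfolding good_face_def by (rule conjunct1)
  have D1: "\<And>x y. x \<in> K \<Longrightarrow> y \<in> K \<Longrightarrow> x \<noteq> y \<Longrightarrow> (x,y) \<in> D \<longleftrightarrow> (y,x) \<notin> D"
    using g1 by blast
  have bc: "(b,c) \<in> D" using D2[OF K(1) ab] .
  have "K = {b,c,a}" using K(1) by (simp add: insert_commute)
  then have ca: "(c,a) \<in> D" using D2[OF _ bc] by simp
  have inK: "a \<in> K" "b \<in> K" "c \<in> K" using K(1) by auto
  have "(b,a) \<notin> D" using D1[OF inK(1) inK(2) K(2)] ab by simp
  moreover have "(c,b) \<notin> D" using D1[OF inK(2) inK(3) K(3)] bc by simp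
  moreover have "(a,c) \<notin> D" using D1[OF inK(3) inK(1) K(4)[symmetric]] ca by simp
  ultimately show ?thesis using bc ca by simp
qed

lemma two_good: assumes K: "card K = 3" and gD: "good_face D K" and gE: "good_face E K"
  shows "(\<forall>x\<in>K. \<forall>y\<in>K. x \<noteq> y \<longrightarrow> ((x,y) \<in> D \<longleftrightarrow> (x,y) \<in> E)) \<or>
         (\<forall>x\<in>K. \<forall>y\<in>K. x \<noteq> y \<longrightarrow> ((x,y) \<in> D \<longleftrightarrow> (y,x) \<in> E))"
proof -
  obtain a b c where abc: "K = {a,b,c}" "a \<noteq> b" "b \<noteq> c" "a \<noteq> c" using K card_3_iff by metis
  have K2: "K = {b,a,c}" using abc(1) by (simp add: insert_commute)
  have inK: "a \<in> K" "b \<in> K" using abc(1) by auto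
  have D1: "(a,b) \<in> D \<longleftrightarrow> (b,a) \<notin> D" using gf_D1[OF gD inK abc(2)] .
  have E1: "(a,b) \<in> E \<longleftrightarrow> (b,a) \<notin> E" using gf_D1[OF gE inK abc(2)] .
  show ?thesis
  proof (cases "(a,b) \<in> D")
    case True
    note d = cyc[OF gD abc True]
    show ?thesis
    proof (cases "(a,b) \<in> E")
      case True
      note e = cyc[OF gE abc True]
      show ?thesis using d e \<open>(a,b) \<in> D\<close> True abc(1) by auto
    next
      case False
      then have baE: "(b,a) \<in> E" using E1 by simp
      note e = cyc[OF gE K2 abc(2)[symmetric] abc(4) abc(3) this]
      show ?thesis using d e \<open>(a,b) \<in> D\<close> False baE abc(1) by auto
    qed
  next
    case False
    then have ba: "(b,a) \<in> D" using D1 by simp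
    note d = cyc[OF gD K2 abc(2)[symmetric] abc(4) abc(3) ba]
    show ?thesis
    proof (cases "(a,b) \<in> E")
      case True
      note e = cyc[OF gE abc True]
      show ?thesis using d e ba False True abc(1) by auto
    next
      case False
      then have baE: "(b,a) \<in> E" using E1 by simp
      note e = cyc[OF gE K2 abc(2)[symmetric] abc(4) abc(3) this]
      show ?thesis using d e ba \<open>(a,b) \<notin> D\<close> False baE abc(1) by auto
    qed
  qed
qed

lemma ball2E: "\<forall>x\<in>K. \<forall>y\<in>K. x \<noteq> y \<longrightarrow> P x y \<Longrightarrow> x \<in> K \<Longrightarrow> y \<in> K \<Longrightarrow> x \<noteq> y \<Longrightarrow> P x y"
  by blast

lemma transfer_face: assumes inj: "inj_on \<phi> K" and c: "card K = 3" and g: "good_face D K"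
  and eq: "\<forall>x\<in>K. \<forall>y\<in>K. x \<noteq> y \<longrightarrow> ((\<phi> x, \<phi> y) \<in> E \<longleftrightarrow> (x,y) \<in> D)"
  shows "good_face E (\<phi> ` K)"
  unfolding good_face_def
proof (intro conjI ballI impI allI)
  fix p q assume pq: "p \<in> \<phi> ` K" "q \<in> \<phi> ` K" "p \<noteq> q"
  obtain x where x: "x \<in> K" "p = \<phi> x" using pq(1) by (rule imageE) simp
  obtain y where y: "y \<in> K" "q = \<phi> y" using pq(2) by (rule imageE) simp
  have ne: "x \<noteq> y" using pq(3) x y by auto
  have e1: "(\<phi> x, \<phi> y) \<in> E \<longleftrightarrow> (x,y) \<in> D" using ball2E[OF eq x(1) y(1) ne] .
  have e2: "(\<phi> y, \<phi> x) \<in> E \<longleftrightarrow> (y,x) \<in> D" using ball2E[OF eq y(1) x(1) ne[symmetric]] .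
  have d: "(x,y) \<in> D \<longleftrightarrow> (y,x) \<notin> D" using gf_D1[OF g x(1) y(1) ne] .
  show "(p,q) \<in> E \<longleftrightarrow> (q,p) \<notin> E" unfolding x(2) y(2) using e1 e2 d by blast
next
  fix p q r assume pqr: "\<phi> ` K = {p,q,r}" "(p,q) \<in> E"
  have "p \<in> \<phi> ` K" "q \<in> \<phi> ` K" "r \<in> \<phi> ` K" using pqr(1) by auto
  then obtain a b c where abc: "a \<in> K" "b \<in> K" "c \<in> K" "p = \<phi> a" "q = \<phi> b" "r = \<phi> c"
    by (metis imageE)
  have "\<phi> ` K = \<phi> ` {a,b,c}" using pqr(1) abc by simp
  moreover have sub: "{a,b,c} \<subseteq> K" using abc by simp
  ultimately have K: "K = {a,b,c}" using inj_on_image_eq_iff[OF inj subset_refl sub] by simp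
  from c K have "card {a,b,c} = 3" by (simp only:)
  then have d3: "a \<noteq> b \<and> b \<noteq> c \<and> a \<noteq> c" by (rule card3_distinct)
  then have d: "a \<noteq> b" "b \<noteq> c" "a \<noteq> c" by auto
  have e1: "(\<phi> a, \<phi> b) \<in> E \<longleftrightarrow> (a,b) \<in> D" using ball2E[OF eq abc(1,2) d(1)] .
  have e2: "(\<phi> b, \<phi> c) \<in> E \<longleftrightarrow> (b,c) \<in> D" using ball2E[OF eq abc(2,3) d(2)] .
  have "(a,b) \<in> D" using e1 pqr(2) abc(4,5) by simp
  then have "(b,c) \<in> D" by (rule gf_D2[OF g K])
  then show "(q,r) \<in> E" using e2 abc(5,6) by simp
qed

lemma pull_face: assumes inj: "inj_on \<phi> K" and c: "card K = 3" and g: "good_face E (\<phi> ` K)"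
  and eq: "\<forall>x\<in>K. \<forall>y\<in>K. x \<noteq> y \<longrightarrow> ((x,y) \<in> D \<longleftrightarrow> (\<phi> x, \<phi> y) \<in> E)"
  shows "good_face D K"
  unfolding good_face_def
proof (intro conjI ballI impI allI)
  fix x y assume xy: "x \<in> K" "y \<in> K" "x \<noteq> y"
  then have ne: "\<phi> x \<noteq> \<phi> y" using inj unfolding inj_on_def by auto
  have e1: "(x,y) \<in> D \<longleftrightarrow> (\<phi> x, \<phi> y) \<in> E" using ball2E[OF eq xy] .
  have e2: "(y,x) \<in> D \<longleftrightarrow> (\<phi> y, \<phi> x) \<in> E" using ball2E[OF eq xy(2,1) xy(3)[symmetric]] .
  have im: "\<phi> x \<in> \<phi> ` K" "\<phi> y \<in> \<phi> ` K" using xy by auto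
  have d: "(\<phi> x, \<phi> y) \<in> E \<longleftrightarrow> (\<phi> y, \<phi> x) \<notin> E" using gf_D1[OF g im ne] .
  show "(x,y) \<in> D \<longleftrightarrow> (y,x) \<notin> D" using e1 e2 d by blast
next
  fix a b c assume abc: "K = {a,b,c}" "(a,b) \<in> D"
  from c abc(1) have "card {a,b,c} = 3" by (simp only:)
  then have d3: "a \<noteq> b \<and> b \<noteq> c \<and> a \<noteq> c" by (rule card3_distinct)
  then have d: "a \<noteq> b" "b \<noteq> c" "a \<noteq> c" by auto
  have im: "\<phi> ` K = {\<phi> a, \<phi> b, \<phi> c}" using abc by simp
  have inK: "a \<in> K" "b \<in> K" "c \<in> K" using abc(1) by auto
  have e1: "(a,b) \<in> D \<longleftrightarrow> (\<phi> a, \<phi> b) \<in> E" using ball2E[OF eq inK(1,2) d(1)] .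
  have e2: "(b,c) \<in> D \<longleftrightarrow> (\<phi> b, \<phi> c) \<in> E" using ball2E[OF eq inK(2,3) d(2)] .
  have "(\<phi> a, \<phi> b) \<in> E" using e1 abc(2) by simp
  then have "(\<phi> b, \<phi> c) \<in> E" by (rule gf_D2[OF g im])
  then show "(b,c) \<in> D" using e2 by simp
qed



lemma cnt_img: assumes "inj \<phi>"
  shows "card {K \<in> (\<lambda>G. \<phi> ` G) ` X. \<phi> ` e0 \<subseteq> K} = card {G\<in>X. e0 \<subseteq> G}"
proof -
  have "{K \<in> (\<lambda>G. \<phi> ` G) ` X. \<phi> ` e0 \<subseteq> K} = (\<lambda>G. \<phi> ` G) ` {G\<in>X. e0 \<subseteq> G}"
    using inj_image_subset_iff[OF assms] by auto
  moreover have "inj_on (\<lambda>G. \<phi> ` G) {G\<in>X. e0 \<subseteq> G}"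
  proof (rule inj_onI)
    fix A B assume "\<phi> ` A = \<phi> ` B"
    then show "A = B" using inj_image_eq_iff[OF assms] by simp
  qed
  ultimately show ?thesis by (simp add: card_image)
qed

context fsurf begin

lemma cnt_minus: assumes "F \<in> S" "e0 \<subseteq> F" "e0 \<in> tri_edges S"
  shows "card {G\<in>S - {F}. e0 \<subseteq> G} = 1"
proof -
  have "{G\<in>S - {F}. e0 \<subseteq> G} = {G\<in>S. e0 \<subseteq> G} - {F}" by auto
  moreover have "finite {G\<in>S. e0 \<subseteq> G}" using finS by simp
  moreover have "F \<in> {G\<in>S. e0 \<subseteq> G}" using assms by simp
  ultimately show ?thesis using edge2[OF assms(3)] by (simp add: card_Diff_singleton)
qed

lemma cnt_notin: assumes "\<not> e0 \<subseteq> F" "e0 \<in> tri_edges S"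
  shows "card {G\<in>S - {F}. e0 \<subseteq> G} = 2"
proof -
  have "{G\<in>S - {F}. e0 \<subseteq> G} = {G\<in>S. e0 \<subseteq> G}" using assms(1) by auto
  then show ?thesis using edge2[OF assms(2)] by simp
qed

lemma fin_face: "K \<in> S \<Longrightarrow> finite K"
  using card3 by (metis card.infinite zero_neq_numeral)

end

locale csum =
  T: fsurf T + T': fsurf T'
  for T :: "'a set set" and T' :: "'b set set" +
  fixes F F' g
  assumes FT: "F \<in> T" and FT': "F' \<in> T'" and bij: "bij_betw g F F'"
begin

abbreviation "h \<equiv> glue_map F g F'"

lemma injg: "inj_on g F" using bij unfolding bij_betw_def by simp
lemma gF: "g ` F = F'" using bij unfolding bij_betw_def by simp

lemma h_g: "a \<in> F \<Longrightarrow> h (g a) = Inl a"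
  unfolding glue_map_def using gF the_inv_into_f_f[OF injg] by auto

lemma h_Inl: "h y = Inl a \<Longrightarrow> y \<in> F' \<and> a \<in> F \<and> y = g a"
proof -
  assume hy: "h y = Inl a"
  then have y: "y \<in> F'" unfolding glue_map_def by (auto split: if_splits)
  then have a: "a = the_inv_into F g y" using hy unfolding glue_map_def by simp
  have "a \<in> F" using the_inv_into_into[OF injg, of y F] y gF a by simp
  moreover have "g a = y" using f_the_inv_into_f[OF injg, of y] y gF a by simp
  ultimately show ?thesis using y by simp
qed

lemma h_Inr: "h y = Inr z \<Longrightarrow> y = z \<and> y \<notin> F'"
  unfolding glue_map_def by (auto split: if_splits)

lemma h_inj: "inj h"
proof (rule injI)
  fix x y assume e: "h x = h y"
  show "x = y"
  proof (cases "x \<in> F'")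
    case True
    then obtain a where a: "h x = Inl a" unfolding glue_map_def by simp
    have "x = g a" using h_Inl[OF a] by simp
    moreover have "h y = Inl a" using a e by simp
    then have "y = g a" using h_Inl by simp
    ultimately show ?thesis by simp
  next
    case False
    then have "h x = Inr x" unfolding glue_map_def by simp
    then have "h y = Inr x" using e by simp
    then show ?thesis using h_Inr[of y x] by simp
  qed
qed

abbreviation "SS \<equiv> conn_sum T T' F F' g"

lemma SS_eq: "SS = (\<lambda>G. Inl ` G) ` (T - {F}) \<union> (\<lambda>G. h ` G) ` (T' - {F'})"
  unfolding conn_sum_def ..

lemma SS_card3: "K \<in> SS \<Longrightarrow> card K = 3"
proof -
  assume "K \<in> SS"
  then consider (l) G where "G \<in> T" "K = Inl ` G" | (r) G where "G \<in> T'" "K = h ` G"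
    unfolding SS_eq by auto
  then show "card K = 3"
  proof cases
    case l then show ?thesis using T.card3 card_image[of Inl G] by (simp add: inj_on_def)
  next
    case r then show ?thesis using T'.card3 card_image[OF inj_on_subset[OF h_inj], of G] by simp
  qed
qed


lemma SS_edge2: assumes e: "e \<in> tri_edges SS" shows "card {K\<in>SS. e \<subseteq> K} = 2"
proof -
  define A where "A = (\<lambda>G. (Inl :: 'a \<Rightarrow> 'a + 'b) ` G) ` (T - {F})"
  define B where "B = (\<lambda>G. h ` G) ` (T' - {F'})"
  have SS: "SS = A \<union> B" using SS_eq unfolding A_def B_def by simp
  have ce: "card e = 2" using e unfolding tri_edges_def by simp
  have ex: "\<exists>K\<in>SS. e \<subseteq> K" using e unfolding tri_edges_def by simp
  have split: "{K\<in>SS. e \<subseteq> K} = {K\<in>A. e \<subseteq> K} \<union> {K\<in>B. e \<subseteq> K}" using SS by auto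
  have disjAB: "A \<inter> B = {}"
  proof (rule ccontr)
    assume "A \<inter> B \<noteq> {}"
    then obtain G G' where G: "G \<in> T" "G' \<in> T'" "G' \<noteq> F'" "Inl ` G = h ` G'"
      unfolding A_def B_def by auto
    have sub: "G' \<subseteq> F'"
    proof
      fix y assume "y \<in> G'"
      then have "h y \<in> Inl ` G" using G(4) by simp
      then obtain a where "h y = Inl a" by auto
      then show "y \<in> F'" using h_Inl by simp
    qed
    have "card G' = card F'" using T'.card3 G(2) FT' by simp
    then have "G' = F'" using card_subset_eq[OF T'.fin_face[OF FT'] sub] by simp
    then show False using G(3) by simp
  qed
  have finA: "finite A" unfolding A_def using T.finS by simp
  have finB: "finite B" unfolding B_def using T'.finS by simp
  have cardsum: "card {K\<in>SS. e \<subseteq> K} = card {K\<in>A. e \<subseteq> K} + card {K\<in>B. e \<subseteq> K}"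
    unfolding split by (rule card_Un_disjoint) (use finA finB disjAB in auto)
  show ?thesis
  proof (cases "e \<subseteq> Inl ` F")
    case True
    define e0 where "e0 = Inl -` e"
    have ee0: "e = Inl ` e0" using True unfolding e0_def by auto
    have e0F: "e0 \<subseteq> F" using True unfolding e0_def by auto
    have c0: "card e0 = 2" using ce unfolding ee0 by (simp add: card_image)
    have e0T: "e0 \<in> tri_edges T" unfolding tri_edges_def using c0 e0F FT by auto
    have ge0: "e = h ` (g ` e0)"
    proof -
      have "h ` (g ` e0) = (\<lambda>a. h (g a)) ` e0" by (simp add: image_image)
      also have "\<dots> = Inl ` e0" using h_g e0F by (intro image_cong) auto
      finally show ?thesis using ee0 by simp
    qed
    have cg: "card (g ` e0) = 2" using card_image[OF inj_on_subset[OF injg e0F]] c0 by simp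
    have ge0F': "g ` e0 \<subseteq> F'" using e0F gF by auto
    have ge0T: "g ` e0 \<in> tri_edges T'" unfolding tri_edges_def using cg ge0F' FT' by auto
    have "card {K\<in>A. e \<subseteq> K} = card {G\<in>T - {F}. e0 \<subseteq> G}"
      unfolding A_def ee0 by (rule cnt_img) simp
    also have "\<dots> = 1" using T.cnt_minus[OF FT e0F e0T] .
    finally have cA: "card {K\<in>A. e \<subseteq> K} = 1" .
    have "card {K\<in>B. e \<subseteq> K} = card {G\<in>T' - {F'}. g ` e0 \<subseteq> G}"
      unfolding B_def ge0 by (rule cnt_img[OF h_inj])
    also have "\<dots> = 1" using T'.cnt_minus[OF FT' ge0F' ge0T] .
    finally have cB: "card {K\<in>B. e \<subseteq> K} = 1" .
    show ?thesis using cardsum cA cB by simp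
  next
    case False
    then obtain p where p: "p \<in> e" "p \<notin> Inl ` F" by auto
    obtain K where K: "K \<in> SS" "e \<subseteq> K" using ex by auto
    show ?thesis
    proof (cases p)
      case (Inl a)
      have aF: "a \<notin> F" using p Inl by auto
      have B0: "{K\<in>B. e \<subseteq> K} = {}"
      proof (rule ccontr)
        assume "{K\<in>B. e \<subseteq> K} \<noteq> {}"
        then obtain G' where "G' \<in> T'" "e \<subseteq> h ` G'" unfolding B_def by auto
        then have "p \<in> h ` G'" using p(1) by auto
        then obtain y where "h y = Inl a" using Inl by auto
        then show False using h_Inl aF by simp
      qed
      have "K \<notin> B" using B0 K by auto
      then have "K \<in> A" using K SS by auto
      then obtain G where G: "G \<in> T" "G \<noteq> F" "K = Inl ` G" unfolding A_def by auto
      define e0 where "e0 = Inl -` e"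
      have ee0: "e = Inl ` e0" using K(2) G(3) unfolding e0_def by auto
      have e0G: "e0 \<subseteq> G" using K(2) G(3) unfolding e0_def by auto
      have c0: "card e0 = 2" using ce unfolding ee0 by (simp add: card_image)
      have e0T: "e0 \<in> tri_edges T" unfolding tri_edges_def using c0 e0G G(1) by auto
      have "a \<in> e0" using p(1) Inl unfolding e0_def by simp
      then have nF: "\<not> e0 \<subseteq> F" using aF by auto
      have "card {K\<in>A. e \<subseteq> K} = card {G\<in>T - {F}. e0 \<subseteq> G}"
        unfolding A_def ee0 by (rule cnt_img) simp
      also have "\<dots> = 2" using T.cnt_notin[OF nF e0T] .
      finally show ?thesis using cardsum B0 by simp
    next
      case (Inr z)
      have A0: "{K\<in>A. e \<subseteq> K} = {}"
      proof (rule ccontr)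
        assume "{K\<in>A. e \<subseteq> K} \<noteq> {}"
        then obtain G where "e \<subseteq> Inl ` G" unfolding A_def by auto
        then have "p \<in> Inl ` G" using p(1) by auto
        then show False using Inr by auto
      qed
      have "K \<notin> A" using A0 K by auto
      then have "K \<in> B" using K SS by auto
      then obtain G where G: "G \<in> T'" "G \<noteq> F'" "K = h ` G" unfolding B_def by auto
      define e0 where "e0 = h -` e"
      have ee0: "e = h ` e0" using K(2) G(3) unfolding e0_def by auto
      have e0G: "e0 \<subseteq> G"
      proof -
        have "h ` e0 \<subseteq> h ` G" using ee0 K(2) G(3) by simp
        then show ?thesis using inj_image_subset_iff[OF h_inj] by simp
      qed
      have c0: "card e0 = 2" using ce card_image[OF inj_on_subset[OF h_inj, of e0]] unfolding ee0 by simp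
      have e0T: "e0 \<in> tri_edges T'" unfolding tri_edges_def using c0 e0G G(1) by auto
      have "p \<in> h ` e0" using p(1) ee0 by simp
      then obtain y where y0: "y \<in> e0" "p = h y" by auto
      then have y: "y \<in> e0" "h y = Inr z" using Inr by auto
      then have "y \<notin> F'" using h_Inr by simp
      then have nF: "\<not> e0 \<subseteq> F'" using y(1) by auto
      have "card {K\<in>B. e \<subseteq> K} = card {G\<in>T' - {F'}. e0 \<subseteq> G}"
        unfolding B_def ee0 by (rule cnt_img[OF h_inj])
      also have "\<dots> = 2" using T'.cnt_notin[OF nF e0T] .
      finally show ?thesis using cardsum A0 by simp
    qed
  qed
qed

lemma SS_fsurf: "fsurf SS"
proof
  show "finite SS" unfolding SS_eq using T.finS T'.finS by simp
  show "\<And>K. K \<in> SS \<Longrightarrow> card K = 3" by (rule SS_card3)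
  show "\<And>e. e \<in> tri_edges SS \<Longrightarrow> card {K \<in> SS. e \<subseteq> K} = 2" by (rule SS_edge2)
qed

lemma SS_good: assumes g1: "good_on T D1" and g2: "good_on T' D2" shows "\<exists>D. good_on SS D"
proof -
  have gF: "good_face D1 F" using g1 FT unfolding good_on_def by simp
  have gF': "good_face D2 (g ` F)" using g2 FT' gF unfolding good_on_def csum.gF[OF csum_axioms] by simp
  have c3: "card F = 3" using T.card3 FT by simp
  define E where "E = {(x,y). (g x, g y) \<in> D2}"
  have gE: "good_face E F"
    by (rule pull_face[OF injg c3 gF']) (simp add: E_def)
  obtain D2' where gD2': "good_on T' D2'"
    and compat: "\<forall>x\<in>F. \<forall>y\<in>F. x \<noteq> y \<longrightarrow> ((x,y) \<in> D1 \<longleftrightarrow> (g x, g y) \<in> D2')"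
  proof -
    from two_good[OF c3 gF gE] show ?thesis
    proof
      assume "\<forall>x\<in>F. \<forall>y\<in>F. x \<noteq> y \<longrightarrow> ((x,y) \<in> D1 \<longleftrightarrow> (x,y) \<in> E)"
      then have "\<forall>x\<in>F. \<forall>y\<in>F. x \<noteq> y \<longrightarrow> ((x,y) \<in> D1 \<longleftrightarrow> (g x, g y) \<in> D2)"
        unfolding E_def by simp
      then show ?thesis using that g2 by blast
    next
      assume "\<forall>x\<in>F. \<forall>y\<in>F. x \<noteq> y \<longrightarrow> ((x,y) \<in> D1 \<longleftrightarrow> (y,x) \<in> E)"
      then have "\<forall>x\<in>F. \<forall>y\<in>F. x \<noteq> y \<longrightarrow> ((x,y) \<in> D1 \<longleftrightarrow> (g x, g y) \<in> D2\<inverse>)"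
        unfolding E_def by simp
      then show ?thesis using that good_conv[OF g2] by blast
    qed
  qed
  define Ds where "Ds = {(Inl x, Inl y) | x y. (x,y) \<in> D1} \<union> {(h x, h y) | x y. (x,y) \<in> D2'}"
  have memL: "(Inl x, Inl y) \<in> Ds \<longleftrightarrow> (x,y) \<in> D1" if ne: "x \<noteq> y" for x y
  proof
    assume "(Inl x, Inl y) \<in> Ds"
    then consider "(x,y) \<in> D1" | x' y' where "Inl x = h x'" "Inl y = h y'" "(x',y') \<in> D2'"
      unfolding Ds_def by auto
    then show "(x,y) \<in> D1"
    proof cases
      case 1 then show ?thesis .
    next
      case 2
      then have x: "x \<in> F" "x' = g x" and y: "y \<in> F" "y' = g y" using h_Inl by metis+
      then show ?thesis using compat ne 2(3) by simp
    qed
  next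
    assume "(x,y) \<in> D1"
    then show "(Inl x, Inl y) \<in> Ds" unfolding Ds_def by auto
  qed
  have memR: "(h x, h y) \<in> Ds \<longleftrightarrow> (x,y) \<in> D2'" if ne: "x \<noteq> y" for x y
  proof
    assume "(h x, h y) \<in> Ds"
    then consider a b where "h x = Inl a" "h y = Inl b" "(a,b) \<in> D1" | x' y' where "h x = h x'" "h y = h y'" "(x',y') \<in> D2'"
      unfolding Ds_def by auto
    then show "(x,y) \<in> D2'"
    proof cases
      case 1
      then have a: "a \<in> F" "x = g a" and b: "b \<in> F" "y = g b" using h_Inl by metis+
      then have "a \<noteq> b" using ne by auto
      then show ?thesis using compat a b 1(3) by simp
    next
      case 2
      then have "x = x'" "y = y'" using h_inj unfolding inj_def by auto
      then show ?thesis using 2(3) by simp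
    qed
  next
    assume "(x,y) \<in> D2'"
    then show "(h x, h y) \<in> Ds" unfolding Ds_def by auto
  qed
  have "good_face Ds K" if K: "K \<in> SS" for K
  proof -
    from K consider (l) G where "G \<in> T" "K = Inl ` G" | (r) G where "G \<in> T'" "K = h ` G"
      unfolding SS_eq by auto
    then show ?thesis
    proof cases
      case l
      have gG: "good_face D1 G" using g1 l(1) unfolding good_on_def by simp
      have cG: "card G = 3" using T.card3 l(1) by simp
      have eq: "\<forall>x\<in>G. \<forall>y\<in>G. x \<noteq> y \<longrightarrow> ((Inl x, Inl y) \<in> Ds \<longleftrightarrow> (x,y) \<in> D1)"
        using memL by simp
      show ?thesis unfolding l(2) by (rule transfer_face[OF inj_Inl cG gG eq])
    next
      case r
      have gG: "good_face D2' G" using gD2' r(1) unfolding good_on_def by simp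
      have cG: "card G = 3" using T'.card3 r(1) by simp
      have eq: "\<forall>x\<in>G. \<forall>y\<in>G. x \<noteq> y \<longrightarrow> ((h x, h y) \<in> Ds \<longleftrightarrow> (x,y) \<in> D2')"
        using memR by simp
      show ?thesis unfolding r(2) by (rule transfer_face[OF inj_on_subset[OF h_inj subset_UNIV] cG gG eq])
    qed
  qed
  then show ?thesis unfolding good_on_def by blast
qed

end

lemma tri_fsurf: "triangulation T \<Longrightarrow> fsurf T"
  unfolding triangulation_def by unfold_locales auto

theorem lemma2:
  fixes T :: "'a set set" and T' :: "'b set set"
    and \<tau> :: "('a \<times> 'a \<times> 'a) set set" and \<tau>' :: "('b \<times> 'b \<times> 'b) set set"
  assumes "triangulation T" and "triangulation T'"
    and "z_orientation T \<tau>" and "z_orientation T' \<tau>'"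
    and "all_faces_type_II T \<tau>" and "all_faces_type_II T' \<tau>'"
    and "F \<in> T" and "F' \<in> T'" and "bij_betw g F F'"
  shows "\<exists>\<sigma>. z_orientation (conn_sum T T' F F' g) \<sigma> \<and>
              all_faces_type_II (conn_sum T T' F F' g) \<sigma>"
proof -
  interpret T: fsurf T using tri_fsurf[OF assms(1)] .
  interpret T': fsurf T' using tri_fsurf[OF assms(2)] .
  interpret C: csum T T' F F' g by unfold_locales (use assms(7-9) in auto)
  have g1: "good_on T {(x,y). dir_count \<tau> x y = 2 \<and> dir_count \<tau> y x = 0}"
    using T.orient_good[OF assms(3,5)] .
  have g2: "good_on T' {(x,y). dir_count \<tau>' x y = 2 \<and> dir_count \<tau>' y x = 0}"
    using T'.orient_good[OF assms(4,6)] .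
  obtain D where D: "good_on (conn_sum T T' F F' g) D" using C.SS_good[OF g1 g2] by blast
  interpret S: fsurf "conn_sum T T' F F' g" by (rule C.SS_fsurf)
  show ?thesis using S.sigma_zorient[OF D] S.sigma_typeII[OF D] by blast
qed
end
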